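(* Let $d,r$ be nonnegative integers such that $r\le\binom{m+d}{d}-r_d$. Then $e_{r+r_d}(d,m)=\overline{e}_r(d,m)$. In particular, $e_r(d,m)=\overline{e}_r(d,m)$ if $d\le q$.
   Context: Let $q$ be a prime power, $\mathbb{F}_q$ the finite field with $q$ elements, $m$ a positive integer. A monomial $\mu\neq1$ in $x_0,\dots,x_m$ written $x_0^{a_0}\cdots x_\ell^{a_\ell}$ with $a_\ell>0$ is projectively reduced if $a_0,\dots,a_{\ell-1}\le q-1$; $1$ is also projectively reduced; a polynomial is projectively reduced if it is an $\mathbb{F}_q$-linear combination of projectively reduced monomials. $r_d$ is the $\mathbb{F}_q$-dimension of the degree-$d$ homogeneous component of the ideal generated by $\{x_i^qx_j-x_ix_j^q:0\le i<j\le m\}$ (this ideal consists of the polynomials generated by homogeneous ones vanishing on $\mathbb{P}^m(\mathbb{F}_q)$; $r_d=0$ for $d\le q$). $e_s(d,m)$ is the maximum of $|V(F_1,\dots,F_s)(\mathbb{F}_q)|$ (the number of points of $\mathbb{P}^m(\mathbb{F}_q)$ where all $F_i$ vanish) over families of $s$ linearly independent homogeneous degree-$d$ polynomials; $\overline{e}_s(d,m)$ is the same maximum restricted to families of $s$ linearly independent projectively reduced homogeneous degree-$d$ polynomials. For $s=0$ the only family is the empty one, giving the value $|\mathbb{P}^m(\mathbb{F}_q)|$. *)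

theory Defs
  imports Main "HOL.Vector_Spaces" "HOL-Library.Function_Algebras" "HOL-Library.Cardinality"
begin

text \<open>Polynomials in the variables x_0,...,x_m over a field are represented by their
coefficient functions on exponent vectors (nat \<Rightarrow> nat); a point of F_q^(m+1) is a
function nat \<Rightarrow> 'a (coordinates beyond m are zero). The finite field F_q is a type
'a of class finite and field, with q = CARD('a).\<close>

definition Mon :: "nat \<Rightarrow> nat \<Rightarrow> (nat \<Rightarrow> nat) set" where
  "Mon d m = {a. (\<forall>i>m. a i = 0) \<and> (\<Sum>i\<le>m. a i) = d}"

definition hom_polys :: "nat \<Rightarrow> nat \<Rightarrow> ((nat \<Rightarrow> nat) \<Rightarrow> 'a::zero) set" where
  "hom_polys d m = {f. \<forall>a. f a \<noteq> 0 \<longrightarrow> a \<in> Mon d m}"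

definition proj_reduced_mon :: "nat \<Rightarrow> (nat \<Rightarrow> nat) \<Rightarrow> bool" where
  "proj_reduced_mon q a \<longleftrightarrow> (\<forall>i. (\<exists>j>i. 0 < a j) \<longrightarrow> a i \<le> q - 1)"

definition proj_reduced_polys :: "nat \<Rightarrow> ((nat \<Rightarrow> nat) \<Rightarrow> 'a::zero) set" where
  "proj_reduced_polys q = {f. \<forall>a. f a \<noteq> 0 \<longrightarrow> proj_reduced_mon q a}"

definition lin_indep_family :: "nat \<Rightarrow> (nat \<Rightarrow> ((nat \<Rightarrow> nat) \<Rightarrow> 'a::field)) \<Rightarrow> bool" where
  "lin_indep_family s F \<longleftrightarrow>
     (\<forall>c. (\<forall>a. (\<Sum>i<s. c i * F i a) = 0) \<longrightarrow> (\<forall>i<s. c i = 0))"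

definition peval :: "nat \<Rightarrow> ((nat \<Rightarrow> nat) \<Rightarrow> 'a::comm_ring_1) \<Rightarrow> (nat \<Rightarrow> 'a) \<Rightarrow> 'a" where
  "peval m f x = (\<Sum>a\<in>{a. f a \<noteq> 0}. f a * (\<Prod>i\<le>m. x i ^ a i))"

definition proj_space :: "nat \<Rightarrow> (nat \<Rightarrow> 'a::field) set set" where
  "proj_space m = {{(\<lambda>i. c * x i) | c. c \<noteq> 0} | x. (\<forall>i>m. x i = 0) \<and> x \<noteq> 0}"

definition zero_set :: "nat \<Rightarrow> nat \<Rightarrow> (nat \<Rightarrow> ((nat \<Rightarrow> nat) \<Rightarrow> 'a::field)) \<Rightarrow> (nat \<Rightarrow> 'a) set set" where
  "zero_set m s F = {P \<in> proj_space m. \<forall>x\<in>P. \<forall>i<s. peval m (F i) x = 0}"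

definition e_max :: "'a::{finite,field} itself \<Rightarrow> nat \<Rightarrow> nat \<Rightarrow> nat \<Rightarrow> nat" where
  "e_max T s d m = Max {card (zero_set m s F) | F :: nat \<Rightarrow> ((nat \<Rightarrow> nat) \<Rightarrow> 'a).
       (\<forall>i<s. F i \<in> hom_polys d m) \<and> lin_indep_family s F}"

definition e_bar :: "'a::{finite,field} itself \<Rightarrow> nat \<Rightarrow> nat \<Rightarrow> nat \<Rightarrow> nat" where
  "e_bar T s d m = Max {card (zero_set m s F) | F :: nat \<Rightarrow> ((nat \<Rightarrow> nat) \<Rightarrow> 'a).
       (\<forall>i<s. F i \<in> hom_polys d m \<and> F i \<in> proj_reduced_polys (CARD('a))) \<and> lin_indep_family s F}"

definition mon_vec :: "(nat \<Rightarrow> nat) \<Rightarrow> ((nat \<Rightarrow> nat) \<Rightarrow> 'a::{zero,one})" where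
  "mon_vec e = (\<lambda>a. if a = e then 1 else 0)"

text \<open>Degree-d monomial multiples x^b (x_i^q x_j - x_i x_j^q), i < j \<le> m; they span the
degree-d homogeneous component of the ideal generated by the x_i^q x_j - x_i x_j^q.\<close>
definition ideal_gens :: "'a::{finite,field} itself \<Rightarrow> nat \<Rightarrow> nat \<Rightarrow> ((nat \<Rightarrow> nat) \<Rightarrow> 'a) set" where
  "ideal_gens T d m =
    {(\<lambda>a. mon_vec (\<lambda>k. b k + (if k = i then CARD('a) else 0) + (if k = j then 1 else 0)) a
         - mon_vec (\<lambda>k. b k + (if k = i then 1 else 0) + (if k = j then CARD('a) else 0)) a)
     | b i j. i < j \<and> j \<le> m \<and> CARD('a) + 1 \<le> d \<and> b \<in> Mon (d - (CARD('a) + 1)) m}"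

definition pscale :: "'a::field \<Rightarrow> ((nat \<Rightarrow> nat) \<Rightarrow> 'a) \<Rightarrow> ((nat \<Rightarrow> nat) \<Rightarrow> 'a)" where
  "pscale c f = (\<lambda>a. c * f a)"

definition r_dim :: "'a::{finite,field} itself \<Rightarrow> nat \<Rightarrow> nat \<Rightarrow> nat" where
  "r_dim T d m = vector_space.dim (pscale :: 'a \<Rightarrow> _) (module.span (pscale :: 'a \<Rightarrow> _) (ideal_gens T d m))"

end

theory Submission
  imports Defs "HOL-Computational_Algebra.Polynomial" "HOL-Library.FuncSet"
begin


lemma ff_pow_card:
  fixes x :: "'a::{finite,field}"
  shows "x ^ CARD('a) = x"
proof (cases "x = 0")
  case True
  have "0 < CARD('a)" by (simp add: card_gt_0_iff)
  then show ?thesis using True by (simp add: zero_power)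
next
  case False
  define A where "A = (UNIV - {0} :: 'a set)"
  have finA: "finite A" by simp
  have im: "(\<lambda>y. x * y) ` A = A"
  proof (rule card_subset_eq[OF finA])
    show "(\<lambda>y. x * y) ` A \<subseteq> A" using False by (auto simp: A_def)
    have "inj_on (\<lambda>y. x * y) A" using False by (auto simp: inj_on_def)
    then show "card ((\<lambda>y. x * y) ` A) = card A" by (rule card_image)
  qed
  have inj: "inj_on (\<lambda>y. x * y) A" using False by (auto simp: inj_on_def)
  have "prod id A = prod id ((\<lambda>y. x * y) ` A)" using im by simp
  also have "\<dots> = prod (\<lambda>y. x * y) A" using prod.reindex[OF inj, of id] by simp
  also have "\<dots> = x ^ card A * prod id A"
    using prod.distrib[of "\<lambda>_. x" "\<lambda>y. y" A] by (simp add: id_def)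
  finally have e: "prod id A = x ^ card A * prod id A" .
  have nz: "prod id A \<noteq> 0" using finA by (simp add: A_def)
  have "x ^ card A = 1" using e nz by (metis mult_cancel_right1)
  moreover have "card A = CARD('a) - 1" by (simp add: A_def card_Diff_singleton)
  moreover have "CARD('a) = Suc (CARD('a) - 1)" using card_gt_0_iff[of "UNIV::'a set"] by simp
  ultimately have "x ^ CARD('a) = x * x ^ card A" by (metis power_Suc)
  then show ?thesis using \<open>x ^ card A = 1\<close> by simp
qed

lemma card_ge2: "2 \<le> CARD('a::{finite,field})"
proof -
  have "card {0::'a, 1} = 2" by simp
  moreover have "card {0::'a, 1} \<le> CARD('a)" by (rule card_mono) auto
  ultimately show ?thesis by simp
qed

interpretation V: vector_space "pscale :: 'a::field \<Rightarrow> ((nat \<Rightarrow> nat) \<Rightarrow> 'a) \<Rightarrow> _"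
  by unfold_locales (auto simp: pscale_def fun_eq_iff algebra_simps)

lemma sum_fun_apply: "(\<Sum>i\<in>A. f i) a = (\<Sum>i\<in>A. f i a)"
  by (induction A rule: infinite_finite_induct) auto

lemma finite_Mon: "finite (Mon d m)"
proof -
  have "Mon d m \<subseteq> (\<lambda>g i. if i \<le> m then g i else 0) ` (PiE {..m} (\<lambda>_. {..d}))"
  proof
    fix a assume a: "a \<in> Mon d m"
    have le: "a i \<le> d" if "i \<le> m" for i
      using a that member_le_sum[of i "{..m}" a] by (auto simp: Mon_def)
    show "a \<in> (\<lambda>g i. if i \<le> m then g i else 0) ` (PiE {..m} (\<lambda>_. {..d}))"
      apply (rule image_eqI[of _ _ "restrict a {..m}"])
      using a le by (auto simp: Mon_def fun_eq_iff)
  qed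
  moreover have "finite (PiE {..m} (\<lambda>_. {..d::nat}))" by (rule finite_PiE) auto
  ultimately show ?thesis by (meson finite_imageI finite_subset)
qed


definition mev :: "nat \<Rightarrow> (nat \<Rightarrow> nat) \<Rightarrow> (nat \<Rightarrow> 'a::comm_ring_1) \<Rightarrow> 'a" where
  "mev m a x = (\<Prod>i\<le>m. x i ^ a i)"

lemma peval_hom:
  assumes "f \<in> hom_polys d m"
  shows "peval m f x = (\<Sum>a\<in>Mon d m. f a * mev m a x)"
proof -
  have "(\<Sum>a\<in>Mon d m. f a * mev m a x) = (\<Sum>a\<in>{a. f a \<noteq> 0}. f a * mev m a x)"
    by (rule sum.mono_neutral_right) (use assms finite_Mon in \<open>auto simp: hom_polys_def\<close>)
  then show ?thesis by (simp add: peval_def mev_def)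
qed

lemma hom_subspace: "V.subspace (hom_polys d m :: ((nat \<Rightarrow> nat) \<Rightarrow> 'a::field) set)"
  unfolding V.subspace_def hom_polys_def pscale_def by (auto, metis add.right_neutral)

lemma red_subspace: "V.subspace (proj_reduced_polys q :: ((nat \<Rightarrow> nat) \<Rightarrow> 'a::field) set)"
  unfolding V.subspace_def proj_reduced_polys_def pscale_def by (auto, metis add.right_neutral)

lemma homD: "f \<in> hom_polys d m \<Longrightarrow> a \<notin> Mon d m \<Longrightarrow> f a = 0"
  by (auto simp: hom_polys_def)

lemma hom_add: "(f::(nat\<Rightarrow>nat)\<Rightarrow>'a::field) \<in> hom_polys d m \<Longrightarrow> g \<in> hom_polys d m \<Longrightarrow> f + g \<in> hom_polys d m"
  using hom_subspace[of d m] unfolding V.subspace_def by blast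

lemma hom_diff: "(f::(nat\<Rightarrow>nat)\<Rightarrow>'a::field) \<in> hom_polys d m \<Longrightarrow> g \<in> hom_polys d m \<Longrightarrow> f - g \<in> hom_polys d m"
proof -
  assume f: "f \<in> hom_polys d m" and g: "g \<in> hom_polys d m"
  have "(f - g) a = 0" if "a \<notin> Mon d m" for a
    using homD[OF f that] homD[OF g that] by simp
  then show ?thesis by (auto simp: hom_polys_def)
qed

lemma hom_scale: "(f::(nat\<Rightarrow>nat)\<Rightarrow>'a::field) \<in> hom_polys d m \<Longrightarrow> pscale c f \<in> hom_polys d m"
  using hom_subspace[of d m] unfolding V.subspace_def by blast

lemma peval_add:
  assumes "(f::(nat\<Rightarrow>nat)\<Rightarrow>'a::field) \<in> hom_polys d m" "g \<in> hom_polys d m"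
  shows "peval m (f + g) x = peval m f x + peval m g x"
  by (simp only: peval_hom[OF assms(1)] peval_hom[OF assms(2)] peval_hom[OF hom_add[OF assms]])
     (simp add: sum.distrib distrib_right)

lemma peval_diff:
  assumes "(f::(nat\<Rightarrow>nat)\<Rightarrow>'a::field) \<in> hom_polys d m" "g \<in> hom_polys d m"
  shows "peval m (f - g) x = peval m f x - peval m g x"
  by (simp only: peval_hom[OF assms(1)] peval_hom[OF assms(2)] peval_hom[OF hom_diff[OF assms]])
     (simp add: sum_subtractf left_diff_distrib)

lemma peval_scale:
  assumes "(f::(nat\<Rightarrow>nat)\<Rightarrow>'a::field) \<in> hom_polys d m"
  shows "peval m (pscale c f) x = c * peval m f x"
  by (simp only: peval_hom[OF assms(1)] peval_hom[OF hom_scale[OF assms]])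
     (simp add: sum_distrib_left pscale_def mult.assoc)

lemma prod_pow_delta: "(\<Prod>k\<le>(m::nat). (x k :: 'a::comm_monoid_mult) ^ (if k = i then n else 0)) = (if i \<le> m then x i ^ n else 1)"
  by (induction m) (auto simp: atMost_Suc le_Suc_eq)

lemma mon_vec_sum:
  assumes "e \<in> S" "finite S"
  shows "(\<Sum>a\<in>S. (mon_vec e a :: 'a::comm_ring_1) * g a) = g e"
proof -
  have "(\<Sum>a\<in>S. (mon_vec e a :: 'a) * g a) = (\<Sum>a\<in>S. if a = e then g a else 0)"
    by (rule sum.cong) (auto simp: mon_vec_def)
  then show ?thesis using assms by simp
qed

lemma gen_props:
  assumes "g \<in> ideal_gens TYPE('a::{finite,field}) d m"
  shows "g \<in> hom_polys d m \<and> (\<forall>x. peval m g x = 0)"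
proof -
  define q where "q = CARD('a)"
  from assms obtain b i j where ij: "i < j" "j \<le> m" and dq: "q + 1 \<le> d"
    and b: "b \<in> Mon (d - (q + 1)) m"
    and g: "g = (\<lambda>a. mon_vec (\<lambda>k. b k + (if k = i then q else 0) + (if k = j then 1 else 0)) a
         - mon_vec (\<lambda>k. b k + (if k = i then 1 else 0) + (if k = j then q else 0)) a)"
    unfolding ideal_gens_def q_def by blast
  define e1 where "e1 = (\<lambda>k. b k + (if k = i then q else 0) + (if k = j then 1 else 0))"
  define e2 where "e2 = (\<lambda>k. b k + (if k = i then 1 else 0) + (if k = j then q else 0))"
  have sb: "(\<Sum>k\<le>m. b k) = d - (q + 1)" "\<forall>k>m. b k = 0" using b by (auto simp: Mon_def)
  have e1: "e1 \<in> Mon d m"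
  proof -
    have "(\<Sum>k\<le>m. e1 k) = (\<Sum>k\<le>m. b k) + (\<Sum>k\<le>m. (if k = i then q else 0)) + (\<Sum>k\<le>m. (if k = j then 1 else 0))"
      unfolding e1_def by (simp add: sum.distrib)
    also have "\<dots> = (d - (q + 1)) + q + 1" using ij sb by simp
    also have "\<dots> = d" using dq by simp
    finally have "(\<Sum>k\<le>m. e1 k) = d" .
    moreover have "\<forall>k>m. e1 k = 0" using ij sb by (simp add: e1_def)
    ultimately show ?thesis by (simp add: Mon_def)
  qed
  have e2: "e2 \<in> Mon d m"
  proof -
    have "(\<Sum>k\<le>m. e2 k) = (\<Sum>k\<le>m. b k) + (\<Sum>k\<le>m. (if k = i then 1 else 0)) + (\<Sum>k\<le>m. (if k = j then q else 0))"
      unfolding e2_def by (simp add: sum.distrib)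
    also have "\<dots> = (d - (q + 1)) + 1 + q" using ij sb by simp
    also have "\<dots> = d" using dq by simp
    finally have "(\<Sum>k\<le>m. e2 k) = d" .
    moreover have "\<forall>k>m. e2 k = 0" using ij sb by (simp add: e2_def)
    ultimately show ?thesis by (simp add: Mon_def)
  qed
  have gh: "g \<in> hom_polys d m"
    using e1 e2 unfolding g hom_polys_def e1_def[symmetric] e2_def[symmetric]
    by (auto simp: mon_vec_def)
  have "peval m g x = 0" for x :: "nat \<Rightarrow> 'a"
  proof -
    have "peval m g x = (\<Sum>a\<in>Mon d m. (mon_vec e1 a - mon_vec e2 a) * mev m a x)"
      using peval_hom[OF gh] unfolding g e1_def[symmetric] e2_def[symmetric] by simp
    also have "\<dots> = mev m e1 x - mev m e2 x"
      using e1 e2 finite_Mon by (simp add: left_diff_distrib sum_subtractf mon_vec_sum)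
    also have "mev m e1 x = mev m b x * (x i ^ q * x j)"
      using ij by (simp add: mev_def e1_def power_add prod.distrib prod_pow_delta)
    also have "mev m e2 x = mev m b x * (x i * x j ^ q)"
      using ij by (simp add: mev_def e2_def power_add prod.distrib prod_pow_delta)
    finally show ?thesis by (simp add: q_def ff_pow_card)
  qed
  with gh show ?thesis by blast
qed

lemma I_props:
  assumes "f \<in> V.span (ideal_gens TYPE('a::{finite,field}) d m)"
  shows "f \<in> hom_polys d m \<and> (\<forall>x. peval m f x = 0)"
  using assms
proof (induction rule: V.span_induct)
  case base
  show ?case
  proof (unfold V.subspace_def, intro conjI ballI allI)
    show "0 \<in> {f. f \<in> hom_polys d m \<and> (\<forall>x. peval m f x = 0)}"
      by (simp add: hom_polys_def peval_def)
  next
    fix f g :: "(nat \<Rightarrow> nat) \<Rightarrow> 'a" assume f: "f \<in> {f. f \<in> hom_polys d m \<and> (\<forall>x. peval m f x = 0)}"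
      and g: "g \<in> {f. f \<in> hom_polys d m \<and> (\<forall>x. peval m f x = 0)}"
    have h: "f + g \<in> hom_polys d m" using f g hom_subspace[of d m] by (auto simp: V.subspace_def)
    have "peval m (f + g) x = peval m f x + peval m g x" for x
      using f g peval_add[of f d m g] by simp
    then show "f + g \<in> {f. f \<in> hom_polys d m \<and> (\<forall>x. peval m f x = 0)}" using f g h by simp
  next
    fix c and f :: "(nat \<Rightarrow> nat) \<Rightarrow> 'a" assume f: "f \<in> {f. f \<in> hom_polys d m \<and> (\<forall>x. peval m f x = 0)}"
    have h: "pscale c f \<in> hom_polys d m" using f hom_subspace[of d m] by (auto simp: V.subspace_def)
    have "peval m (pscale c f) x = c * peval m f x" for x
      using f peval_scale[of f d m c] by simp
    then show "pscale c f \<in> {f. f \<in> hom_polys d m \<and> (\<forall>x. peval m f x = 0)}" using f h by simp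
  qed
next
  case (step x)
  then show ?case using gen_props by blast
qed


definition mu :: "nat \<Rightarrow> (nat \<Rightarrow> nat) \<Rightarrow> nat" where
  "mu m a = (\<Sum>k\<le>m. a k * (m - k))"

lemma sum_delta_mult: "(k::nat) \<le> m \<Longrightarrow> (\<Sum>l\<le>m. (if l = k then c else 0) * f l) = c * (f k :: nat)"
proof -
  assume "k \<le> m"
  have "(\<Sum>l\<le>m. (if l = k then c else 0) * f l) = (\<Sum>l\<le>m. (if l = k then c * f k else 0))"
    by (rule sum.cong) auto
  then show ?thesis using \<open>k \<le> m\<close> by simp
qed

lemma mu_shift:
  assumes "i \<le> m" "j \<le> m"
  shows "mu m (\<lambda>k. b k + (if k = i then s else 0) + (if k = j then t else 0)) = mu m b + s * (m - i) + t * (m - j)"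
proof -
  have "mu m (\<lambda>k. b k + (if k = i then s else 0) + (if k = j then t else 0))
     = (\<Sum>k\<le>m. b k * (m - k)) + (\<Sum>k\<le>m. (if k = i then s else 0) * (m - k)) + (\<Sum>k\<le>m. (if k = j then t else 0) * (m - k))"
    unfolding mu_def by (simp add: sum.distrib distrib_right)
  also have "\<dots> = mu m b + s * (m - i) + t * (m - j)"
    using assms by (simp add: sum_delta_mult mu_def)
  finally show ?thesis .
qed

lemma mon_vec_hom: "a \<in> Mon d m \<Longrightarrow> (mon_vec a :: (nat \<Rightarrow> nat) \<Rightarrow> 'a::field) \<in> hom_polys d m"
  by (auto simp: hom_polys_def mon_vec_def)

lemma mon_vec_red: "proj_reduced_mon q a \<Longrightarrow> (mon_vec a :: (nat \<Rightarrow> nat) \<Rightarrow> 'a::field) \<in> proj_reduced_polys q"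
  by (auto simp: proj_reduced_polys_def mon_vec_def)

lemma nat_ineq_aux: "v < (u::nat) \<Longrightarrow> 2 \<le> (q::nat) \<Longrightarrow> u + q * v < q * u + v"
proof -
  assume "v < u" "2 \<le> q"
  then obtain p where p: "q = Suc (Suc p)" by (metis add_2_eq_Suc le_Suc_ex)
  have "p * v \<le> p * u" using \<open>v < u\<close> by simp
  then show ?thesis using add_less_le_mono[OF \<open>v < u\<close> \<open>p * v \<le> p * u\<close>] p by simp
qed

lemma reduce_mon:
  assumes "a \<in> Mon d m"
  shows "\<exists>g. g \<in> hom_polys d m \<and> g \<in> proj_reduced_polys CARD('a)
           \<and> (mon_vec a - g :: (nat \<Rightarrow> nat) \<Rightarrow> 'a::{finite,field}) \<in> V.span (ideal_gens TYPE('a) d m)"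
  using assms
proof (induction "mu m a" arbitrary: a rule: less_induct)
  case less
  define q where "q = CARD('a)"
  have q2: "2 \<le> q" unfolding q_def by (rule card_ge2)
  show ?case
  proof (cases "proj_reduced_mon q a")
    case True
    then show ?thesis using less.prems mon_vec_hom mon_vec_red unfolding q_def
      by (metis V.span_zero diff_self)
  next
    case False
    then obtain i j where ij: "i < j" "0 < a j" "q \<le> a i"
      unfolding proj_reduced_mon_def by force
    have am: "\<forall>k>m. a k = 0" "(\<Sum>k\<le>m. a k) = d" using less.prems by (auto simp: Mon_def)
    have jm: "j \<le> m"
    proof (rule ccontr)
      assume "\<not> j \<le> m" then have "a j = 0" using am by simp
      with ij show False by simp
    qed
    have im: "i \<le> m" using ij jm by simp
    define b where "b = (\<lambda>k. a k - (if k = i then q else 0) - (if k = j then 1 else 0))"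
    define a' where "a' = (\<lambda>k. b k + (if k = i then 1 else 0) + (if k = j then q else 0))"
    have ea: "(\<lambda>k. b k + (if k = i then q else 0) + (if k = j then 1 else 0)) = a"
      using ij by (auto simp: b_def fun_eq_iff)
    have "(\<Sum>k\<in>{i,j}. a k) \<le> (\<Sum>k\<le>m. a k)"
      by (rule sum_mono2) (use im jm in auto)
    then have dq: "q + 1 \<le> d" using ij am by simp
    have sa: "(\<Sum>k\<le>m. a k) = (\<Sum>k\<le>m. b k) + q + 1"
    proof -
      have "(\<Sum>k\<le>m. a k) = (\<Sum>k\<le>m. b k + (if k = i then q else 0) + (if k = j then 1 else 0))"
        using ea by (metis (no_types, lifting))
      also have "\<dots> = (\<Sum>k\<le>m. b k) + (\<Sum>k\<le>m. (if k = i then q else 0)) + (\<Sum>k\<le>m. (if k = j then 1 else 0))"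
        by (simp add: sum.distrib)
      also have "\<dots> = (\<Sum>k\<le>m. b k) + q + 1" using im jm by simp
      finally show ?thesis .
    qed
    have bM: "b \<in> Mon (d - (q + 1)) m"
      using sa am ij im jm by (auto simp: Mon_def b_def)
    have a'M: "a' \<in> Mon d m"
    proof -
      have "(\<Sum>k\<le>m. a' k) = (\<Sum>k\<le>m. b k) + (\<Sum>k\<le>m. (if k = i then 1 else 0)) + (\<Sum>k\<le>m. (if k = j then q else 0))"
        unfolding a'_def by (simp add: sum.distrib)
      also have "\<dots> = d" using im jm sa am by simp
      finally show ?thesis using am im jm by (auto simp: Mon_def a'_def b_def)
    qed
    have gen: "(mon_vec a - mon_vec a' :: (nat \<Rightarrow> nat) \<Rightarrow> 'a) \<in> ideal_gens TYPE('a) d m"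
      unfolding ideal_gens_def q_def[symmetric]
      apply (rule CollectI)
      apply (rule exI[of _ b], rule exI[of _ i], rule exI[of _ j])
      using ij jm dq bM by (simp add: ea a'_def[symmetric] fun_diff_def)
    have "mu m a' < mu m a"
    proof -
      have "mu m a = mu m b + q * (m - i) + 1 * (m - j)"
        using mu_shift[OF im jm, of b q 1] ea by simp
      moreover have "mu m a' = mu m b + 1 * (m - i) + q * (m - j)"
        using mu_shift[OF im jm, of b 1 q] unfolding a'_def by simp
      moreover have "(m - i) + q * (m - j) < q * (m - i) + (m - j)"
        by (rule nat_ineq_aux) (use ij jm q2 in auto)
      ultimately show ?thesis by simp
    qed
    then obtain g where g: "g \<in> hom_polys d m" "g \<in> proj_reduced_polys CARD('a)"
       "(mon_vec a' - g :: (nat \<Rightarrow> nat) \<Rightarrow> 'a) \<in> V.span (ideal_gens TYPE('a) d m)"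
      using less.hyps a'M by blast
    have "(mon_vec a - g :: (nat \<Rightarrow> nat) \<Rightarrow> 'a) = (mon_vec a - mon_vec a') + (mon_vec a' - g)" by simp
    also have "\<dots> \<in> V.span (ideal_gens TYPE('a) d m)"
      by (rule V.span_add[OF V.span_base[OF gen] g(3)])
    finally show ?thesis using g by blast
  qed
qed


lemma univ_zero:
  fixes c :: "nat \<Rightarrow> 'a::{finite,field}"
  assumes "\<And>t. (\<Sum>k<CARD('a). c k * t ^ k) = 0" and "k < CARD('a)"
  shows "c k = 0"
proof -
  define p where "p = (\<Sum>k<CARD('a). monom (c k) k)"
  have ev: "poly p t = (\<Sum>k<CARD('a). c k * t ^ k)" for t
    by (simp add: p_def poly_sum poly_monom)
  have q0: "0 < CARD('a)" by (simp add: card_gt_0_iff)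
  have dg: "degree p \<le> CARD('a) - 1"
    unfolding p_def by (rule degree_sum_le) (auto intro: order.trans[OF degree_monom_le])
  have "p = 0"
  proof (rule ccontr)
    assume "p \<noteq> 0"
    then have "card {x. poly p x = 0} \<le> degree p" by (rule card_poly_roots_bound)
    moreover have "{x. poly p x = 0} = UNIV" using ev assms(1) by auto
    ultimately show False using dg q0 by simp
  qed
  then have "coeff p k = 0" by simp
  moreover have "coeff p k = c k"
    using assms(2) by (simp add: p_def coeff_sum)
  ultimately show ?thesis by simp
qed

definition Box :: "nat \<Rightarrow> nat \<Rightarrow> (nat \<Rightarrow> nat) set" where
  "Box B n = {a. \<forall>i. (i < n \<longrightarrow> a i < B) \<and> (n \<le> i \<longrightarrow> a i = 0)}"

lemma finite_Box: "finite (Box B n)"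
proof -
  have "Box B n \<subseteq> (\<lambda>g i. if i < n then g i else 0) ` (PiE {..<n} (\<lambda>_. {..<B}))"
  proof
    fix a assume a: "a \<in> Box B n"
    show "a \<in> (\<lambda>g i. if i < n then g i else 0) ` (PiE {..<n} (\<lambda>_. {..<B}))"
      apply (rule image_eqI[of _ _ "restrict a {..<n}"])
      using a by (auto simp: Box_def fun_eq_iff)
  qed
  moreover have "finite (PiE {..<n} (\<lambda>_. {..<B::nat}))" by (rule finite_PiE) auto
  ultimately show ?thesis by (meson finite_imageI finite_subset)
qed

lemma Box_Suc: "Box B (Suc n) = (\<lambda>(a, k). a(n := k)) ` (Box B n \<times> {..<B})"
proof
  show "Box B (Suc n) \<subseteq> (\<lambda>(a, k). a(n := k)) ` (Box B n \<times> {..<B})"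
  proof
    fix a assume a: "a \<in> Box B (Suc n)"
    show "a \<in> (\<lambda>(a, k). a(n := k)) ` (Box B n \<times> {..<B})"
      apply (rule image_eqI[of _ _ "(a(n := 0), a n)"])
      using a by (auto simp: Box_def)
  qed
  show "(\<lambda>(a, k). a(n := k)) ` (Box B n \<times> {..<B}) \<subseteq> Box B (Suc n)"
    by (auto simp: Box_def)
qed

lemma Box_inj: "inj_on (\<lambda>(a, k). a(n := k)) (Box B n \<times> {..<B})"
proof (rule inj_onI, clarify)
  fix a k a' k' assume "a \<in> Box B n" "a' \<in> Box B n" "a(n := k) = a'(n := k')"
  then show "a = a' \<and> k = k'"
    by (auto simp: Box_def fun_eq_iff) (metis order_refl, metis)
qed

lemma aff_zero:
  fixes c :: "(nat \<Rightarrow> nat) \<Rightarrow> 'a::{finite,field}"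
  assumes "\<And>x. (\<Sum>a\<in>Box CARD('a) n. c a * (\<Prod>i<n. x i ^ a i)) = 0"
    and "a \<in> Box CARD('a) n"
  shows "c a = 0"
  using assms
proof (induction n arbitrary: c a)
  case 0
  have "Box CARD('a) 0 = {\<lambda>_. 0}" by (auto simp: Box_def)
  then show ?case using 0 by simp
next
  case (Suc n)
  define q where "q = CARD('a)"
  have key: "(\<Sum>a\<in>Box q (Suc n). c a * (\<Prod>i<Suc n. x i ^ a i))
     = (\<Sum>k<q. (\<Sum>a\<in>Box q n. c (a(n := k)) * (\<Prod>i<n. x i ^ a i)) * x n ^ k)" for x :: "nat \<Rightarrow> 'a"
  proof -
    have "(\<Sum>a\<in>Box q (Suc n). c a * (\<Prod>i<Suc n. x i ^ a i))
       = (\<Sum>(a,k)\<in>Box q n \<times> {..<q}. c (a(n := k)) * (\<Prod>i<Suc n. x i ^ (a(n := k)) i))"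
      unfolding Box_Suc by (subst sum.reindex[OF Box_inj]) (auto intro!: sum.cong)
    also have "\<dots> = (\<Sum>a\<in>Box q n. \<Sum>k<q. c (a(n := k)) * (\<Prod>i<Suc n. x i ^ (a(n := k)) i))"
      by (rule sum.cartesian_product[symmetric])
    also have "\<dots> = (\<Sum>a\<in>Box q n. \<Sum>k<q. c (a(n := k)) * (\<Prod>i<n. x i ^ a i) * x n ^ k)"
    proof (intro sum.cong refl)
      fix a k
      have "(\<Prod>i<n. x i ^ (a(n := k)) i) = (\<Prod>i<n. x i ^ a i)" by (rule prod.cong) auto
      then show "c (a(n := k)) * (\<Prod>i<Suc n. x i ^ (a(n := k)) i) = c (a(n := k)) * (\<Prod>i<n. x i ^ a i) * x n ^ k"
        by (simp add: mult.assoc)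
    qed
    also have "\<dots> = (\<Sum>k<q. \<Sum>a\<in>Box q n. c (a(n := k)) * (\<Prod>i<n. x i ^ a i) * x n ^ k)"
      by (rule sum.swap)
    also have "\<dots> = (\<Sum>k<q. (\<Sum>a\<in>Box q n. c (a(n := k)) * (\<Prod>i<n. x i ^ a i)) * x n ^ k)"
      by (simp add: sum_distrib_right)
    finally show ?thesis .
  qed
  have C0: "(\<Sum>a\<in>Box q n. c (a(n := k)) * (\<Prod>i<n. y i ^ a i)) = 0" if "k < q" for k y
  proof -
    have "(\<Sum>k<q. (\<Sum>a\<in>Box q n. c (a(n := k)) * (\<Prod>i<n. y i ^ a i)) * t ^ k) = 0" for t
    proof -
      have "(\<Prod>i<n. (y(n := t)) i ^ a i) = (\<Prod>i<n. y i ^ a i)" for a by (rule prod.cong) auto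
      moreover have "(\<Sum>k<q. (\<Sum>a\<in>Box q n. c (a(n := k)) * (\<Prod>i<n. (y(n:=t)) i ^ a i)) * (y(n:=t)) n ^ k) = 0"
        using key[of "y(n := t)"] Suc.prems(1)[of "y(n := t)"] unfolding q_def by (simp only:)
      ultimately show ?thesis by simp
    qed
    then show ?thesis using univ_zero[of "\<lambda>k. (\<Sum>a\<in>Box q n. c (a(n := k)) * (\<Prod>i<n. y i ^ a i))" k] that
      unfolding q_def by (simp add: mult.commute)
  qed
  have a: "a(n := 0) \<in> Box q n" "a n < q" using Suc.prems(2) by (auto simp: Box_def q_def)
  have "c ((a(n := 0))(n := a n)) = 0"
    using Suc.IH[of "\<lambda>b. c (b(n := a n))" "a(n := 0)"] C0[OF a(2)] a(1) unfolding q_def by blast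
  then show ?case by simp
qed


lemma aff_zero_gen:
  fixes c :: "'b \<Rightarrow> 'a::{finite,field}" and \<pi> :: "'b \<Rightarrow> nat \<Rightarrow> nat"
  assumes fin: "finite S" and inj: "inj_on \<pi> S" and sub: "\<pi> ` S \<subseteq> Box CARD('a) n"
    and z: "\<And>x. (\<Sum>s\<in>S. c s * (\<Prod>i<n. x i ^ \<pi> s i)) = 0"
    and s: "s \<in> S"
  shows "c s = 0"
proof -
  define c' where "c' b = (if b \<in> \<pi> ` S then c (the_inv_into S \<pi> b) else 0)" for b
  have "(\<Sum>b\<in>Box CARD('a) n. c' b * (\<Prod>i<n. x i ^ b i)) = 0" for x :: "nat \<Rightarrow> 'a"
  proof -
    have "(\<Sum>b\<in>Box CARD('a) n. c' b * (\<Prod>i<n. x i ^ b i)) = (\<Sum>b\<in>\<pi> ` S. c' b * (\<Prod>i<n. x i ^ b i))"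
      by (rule sum.mono_neutral_right) (use finite_Box sub in \<open>auto simp: c'_def\<close>)
    also have "\<dots> = (\<Sum>s\<in>S. c' (\<pi> s) * (\<Prod>i<n. x i ^ \<pi> s i))"
      by (rule sum.reindex[OF inj, unfolded comp_def])
    also have "\<dots> = (\<Sum>s\<in>S. c s * (\<Prod>i<n. x i ^ \<pi> s i))"
      by (rule sum.cong) (auto simp: c'_def the_inv_into_f_f[OF inj])
    finally show ?thesis using z by simp
  qed
  then have "c' (\<pi> s) = 0" using aff_zero[of c' n "\<pi> s"] sub s by blast
  then show ?thesis using s by (simp add: c'_def the_inv_into_f_f[OF inj])
qed



lemma Mon_sum_split:
  assumes "b \<in> Mon d m" "l \<le> m" "\<forall>j>l. b j = 0"
  shows "b l = d - (\<Sum>i<l. b i)"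
proof -
  have "d = (\<Sum>i\<le>m. b i)" using assms by (simp add: Mon_def)
  also have "\<dots> = (\<Sum>i\<le>l. b i)"
    by (rule sum.mono_neutral_right) (use assms in auto)
  also have "\<dots> = (\<Sum>i<l. b i) + b l" by (simp add: lessThan_Suc_atMost[symmetric])
  finally show ?thesis by simp
qed

lemma proj_zero:
  fixes f :: "(nat \<Rightarrow> nat) \<Rightarrow> 'a::{finite,field}"
  assumes hom: "f \<in> hom_polys d m" and red: "f \<in> proj_reduced_polys CARD('a)"
    and van: "\<And>x. peval m f x = 0"
  shows "f = 0"
proof -
  define q where "q = CARD('a)"
  have q2: "2 \<le> q" unfolding q_def by (rule card_ge2)
  have fM: "f b \<noteq> 0 \<Longrightarrow> b \<in> Mon d m" for b using hom by (auto simp: hom_polys_def)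
  have Q: "\<forall>a. (\<forall>j\<ge>l. a j = 0) \<longrightarrow> f a = 0" for l
  proof (induction l)
    case 0
    show ?case
    proof (intro allI impI)
      fix a :: "nat \<Rightarrow> nat" assume "\<forall>j\<ge>0. a j = 0"
      then have a0: "a = (\<lambda>_. 0)" by auto
      show "f a = 0"
      proof (rule ccontr)
        assume "f a \<noteq> 0"
        then have "a \<in> Mon d m" by (rule fM)
        then have d0: "d = 0" using a0 by (simp add: Mon_def)
        have MM: "Mon d m = {\<lambda>_. 0}"
          using d0 by (auto simp: Mon_def fun_eq_iff) (metis atMost_iff not_le)
        have "peval m f (\<lambda>_. 1) = f (\<lambda>_. 0)"
          using peval_hom[OF hom] by (simp add: MM mev_def)
        then show False using van \<open>f a \<noteq> 0\<close> a0 by simp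
      qed
    qed
  next
    case (Suc l)
    show ?case
    proof (intro allI impI)
      fix a :: "nat \<Rightarrow> nat" assume aS: "\<forall>j\<ge>Suc l. a j = 0"
      show "f a = 0"
      proof (cases "a l = 0")
        case True
        then show ?thesis using Suc.IH aS by (metis le_Suc_eq le_antisym not_less_eq_eq)
      next
        case False
        show ?thesis
        proof (rule ccontr)
          assume fa: "f a \<noteq> 0"
          then have aM: "a \<in> Mon d m" by (rule fM)
          have lm: "l \<le> m"
          proof (rule ccontr)
            assume "\<not> l \<le> m" then have "a l = 0" using aM by (simp add: Mon_def)
            with False show False by simp
          qed
          define S where "S = {b. f b \<noteq> 0 \<and> 0 < b l \<and> (\<forall>j>l. b j = 0)}"
          define \<pi> where "\<pi> b = (\<lambda>i. if i < l then b i else 0)" for b :: "nat \<Rightarrow> nat"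
          have SM: "S \<subseteq> Mon d m" using fM by (auto simp: S_def)
          have finS: "finite S" using finite_subset[OF SM finite_Mon] .
          have aSS: "a \<in> S" using fa False aS by (auto simp: S_def)
          have inj: "inj_on \<pi> S"
          proof (rule inj_onI)
            fix b b' assume b: "b \<in> S" and b': "b' \<in> S" and e: "\<pi> b = \<pi> b'"
            have lt: "\<forall>i<l. b i = b' i" using e by (auto simp: \<pi>_def fun_eq_iff) (metis)
            have "b l = d - (\<Sum>i<l. b i)" using Mon_sum_split[of b d m l] b SM lm by (auto simp: S_def)
            moreover have "b' l = d - (\<Sum>i<l. b' i)" using Mon_sum_split[of b' d m l] b' SM lm by (auto simp: S_def)
            moreover have "(\<Sum>i<l. b i) = (\<Sum>i<l. b' i)" using lt by simp
            ultimately have "b l = b' l" by simp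
            then show "b = b'" using lt b b' by (auto simp: S_def fun_eq_iff) (metis linorder_neqE_nat)
          qed
          have sub: "\<pi> ` S \<subseteq> Box CARD('a) l"
          proof
            fix p assume "p \<in> \<pi> ` S"
            then obtain b where b: "b \<in> S" and p: "p = \<pi> b" by blast
            have "proj_reduced_mon q b" using red b by (auto simp: S_def proj_reduced_polys_def q_def)
            then have "b i \<le> q - 1" if "i < l" for i
              using b that unfolding proj_reduced_mon_def S_def by blast
            then have "b i < q" if "i < l" for i proof -
              have "b i \<le> q - 1" using that \<open>\<And>i. i < l \<Longrightarrow> b i \<le> q - 1\<close> by blast
              then show ?thesis using q2 by arith
            qed
            then show "p \<in> Box CARD('a) l" by (auto simp: p \<pi>_def Box_def q_def)
          qed
          have z: "(\<Sum>b\<in>S. f b * (\<Prod>i<l. y i ^ \<pi> b i)) = 0" for y :: "nat \<Rightarrow> 'a"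
          proof -
            define x where "x i = (if i < l then y i else if i = l then 1 else 0)" for i
            have "0 = peval m f x" using van by simp
            also have "\<dots> = (\<Sum>b\<in>Mon d m. f b * mev m b x)" by (rule peval_hom[OF hom])
            also have "\<dots> = (\<Sum>b\<in>S. f b * mev m b x)"
            proof (rule sum.mono_neutral_right[OF finite_Mon SM], rule ballI)
              fix b assume b: "b \<in> Mon d m - S"
              show "f b * mev m b x = 0"
              proof (cases "\<exists>j>l. 0 < b j")
                case True
                then obtain j where j: "j > l" "0 < b j" by blast
                have "j \<le> m"
                proof (rule ccontr)
                  assume "\<not> j \<le> m" then have "b j = 0" using b by (simp add: Mon_def)
                  with j show False by simp
                qed
                then have "mev m b x = 0" unfolding mev_def
                  using j by (intro prod_zero) (auto simp: x_def intro!: bexI[of _ j])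
                then show ?thesis by simp
              next
                case False
                show ?thesis
                proof (cases "f b = 0")
                  case fb: False
                  have bl: "b l = 0" using b fb False by (auto simp: S_def)
                  have "\<forall>j\<ge>l. b j = 0"
                  proof (intro allI impI)
                    fix j assume "l \<le> j" then show "b j = 0" using bl False by (cases "j = l") auto
                  qed
                  then have "f b = 0" using Suc.IH by blast
                  with fb show ?thesis by simp
                qed simp
              qed
            qed
            also have "\<dots> = (\<Sum>b\<in>S. f b * (\<Prod>i<l. y i ^ \<pi> b i))"
            proof (rule sum.cong[OF refl])
              fix b assume b: "b \<in> S"
              have "mev m b x = (\<Prod>i<l. x i ^ b i)" unfolding mev_def
                by (rule prod.mono_neutral_right) (use b lm in \<open>auto simp: x_def S_def\<close>)
              also have "\<dots> = (\<Prod>i<l. y i ^ \<pi> b i)" by (rule prod.cong) (auto simp: x_def \<pi>_def)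
              finally show "f b * mev m b x = f b * (\<Prod>i<l. y i ^ \<pi> b i)" by simp
            qed
            finally show ?thesis by simp
          qed
          have "f a = 0" by (rule aff_zero_gen[OF finS inj sub z aSS])
          with fa show False by simp
        qed
      qed
    qed
  qed
  show ?thesis
  proof
    fix a show "f a = 0 a"
    proof (cases "f a = 0")
      case False
      then have "a \<in> Mon d m" by (rule fM)
      then have "\<forall>j\<ge>Suc m. a j = 0" by (auto simp: Mon_def)
      then show ?thesis using Q by simp
    qed simp
  qed
qed



lemma sum_split_add: "(\<Sum>k<(r::nat) + (n::nat). f k) = (\<Sum>k<r. f k) + (\<Sum>j<n. (f (r + j) :: 'b::comm_monoid_add))"
  by (induction n) (simp_all add: add.assoc)

lemma hom_sum: "(\<And>i. i \<in> A \<Longrightarrow> (F i :: (nat \<Rightarrow> nat) \<Rightarrow> 'a::field) \<in> hom_polys d m) \<Longrightarrow> sum F A \<in> hom_polys d m"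
  by (rule V.subspace_sum[OF hom_subspace])

lemma red_sum: "(\<And>i. i \<in> A \<Longrightarrow> (F i :: (nat \<Rightarrow> nat) \<Rightarrow> 'a::field) \<in> proj_reduced_polys q) \<Longrightarrow> sum F A \<in> proj_reduced_polys q"
  by (rule V.subspace_sum[OF red_subspace])

lemma red_scale: "(f :: (nat \<Rightarrow> nat) \<Rightarrow> 'a::field) \<in> proj_reduced_polys q \<Longrightarrow> pscale c f \<in> proj_reduced_polys q"
  by (rule V.subspace_scale[OF red_subspace])

lemma hom_expand:
  assumes "(f :: (nat \<Rightarrow> nat) \<Rightarrow> 'a::field) \<in> hom_polys d m"
  shows "f = (\<Sum>a\<in>Mon d m. pscale (f a) (mon_vec a))"
proof
  fix x
  have "(\<Sum>a\<in>Mon d m. pscale (f a) (mon_vec a)) x = (\<Sum>a\<in>Mon d m. f a * mon_vec a x)"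
    by (simp add: sum_fun_apply pscale_def)
  also have "\<dots> = (\<Sum>a\<in>Mon d m. if a = x then f x else 0)"
    by (rule sum.cong) (auto simp: mon_vec_def)
  also have "\<dots> = f x" using homD[OF assms, of x] finite_Mon by auto
  finally show "f x = (\<Sum>a\<in>Mon d m. pscale (f a) (mon_vec a)) x" by simp
qed

lemma reduce_hom:
  assumes "(f :: (nat \<Rightarrow> nat) \<Rightarrow> 'a::{finite,field}) \<in> hom_polys d m"
  shows "\<exists>g. g \<in> hom_polys d m \<and> g \<in> proj_reduced_polys CARD('a) \<and> f - g \<in> V.span (ideal_gens TYPE('a) d m)"
proof -
  have "\<forall>a\<in>Mon d m. \<exists>g. g \<in> hom_polys d m \<and> g \<in> proj_reduced_polys CARD('a)
           \<and> (mon_vec a - g :: (nat \<Rightarrow> nat) \<Rightarrow> 'a) \<in> V.span (ideal_gens TYPE('a) d m)"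
    using reduce_mon by blast
  then obtain G where G: "\<And>a. a \<in> Mon d m \<Longrightarrow> G a \<in> hom_polys d m \<and> G a \<in> proj_reduced_polys CARD('a)
           \<and> (mon_vec a - G a :: (nat \<Rightarrow> nat) \<Rightarrow> 'a) \<in> V.span (ideal_gens TYPE('a) d m)"
    by metis
  define g where "g = (\<Sum>a\<in>Mon d m. pscale (f a) (G a))"
  have "g \<in> hom_polys d m" unfolding g_def using G by (intro hom_sum hom_scale) auto
  moreover have "g \<in> proj_reduced_polys CARD('a)" unfolding g_def using G by (intro red_sum red_scale) auto
  moreover have "f - g = (\<Sum>a\<in>Mon d m. pscale (f a) (mon_vec a - G a))"
    by (subst hom_expand[OF assms]) (simp add: g_def sum_subtractf V.scale_right_diff_distrib)
  moreover have "\<dots> \<in> V.span (ideal_gens TYPE('a) d m)"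
    using G by (intro V.span_sum V.span_scale) auto
  ultimately show ?thesis by metis
qed

lemma sum_img_apply:
  assumes "inj_on F A"
  shows "(\<Sum>v\<in>F ` A. pscale (u v) v) a = (\<Sum>k\<in>A. u (F k) * (F k a :: 'a::field))"
  by (simp add: sum_fun_apply pscale_def sum.reindex[OF assms])

lemma lif_imp:
  assumes "lin_indep_family s (F :: nat \<Rightarrow> (nat \<Rightarrow> nat) \<Rightarrow> 'a::field)"
  shows "inj_on F {..<s} \<and> V.independent (F ` {..<s})"
proof
  show inj: "inj_on F {..<s}"
  proof (rule inj_onI, rule ccontr)
    fix i j assume i: "i \<in> {..<s}" and j: "j \<in> {..<s}" and e: "F i = F j" and ne: "i \<noteq> j"
    define c where "c k = (if k = i then 1 else if k = j then -1 else (0::'a))" for k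
    have "(\<Sum>k<s. c k * F k a) = 0" for a
    proof -
      have "(\<Sum>k<s. c k * F k a) = (\<Sum>k<s. (if k = i then F i a else 0)) + (\<Sum>k<s. (if k = j then - F j a else 0))"
        by (subst sum.distrib[symmetric], rule sum.cong) (auto simp: c_def ne)
      then show ?thesis using i j e by simp
    qed
    then have "c i = 0" using assms i unfolding lin_indep_family_def by blast
    then show False by (simp add: c_def)
  qed
  show "V.independent (F ` {..<s})"
  proof
    assume "V.dependent (F ` {..<s})"
    then obtain u where u: "\<exists>v\<in>F ` {..<s}. u v \<noteq> 0" "(\<Sum>v\<in>F ` {..<s}. pscale (u v) v) = 0"
      using V.dependent_finite[of "F ` {..<s}"] by auto
    have "(\<Sum>k<s. u (F k) * F k a) = 0" for a
      using fun_cong[OF u(2), of a] sum_img_apply[OF inj, of u a] by simp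
    then have "\<forall>k<s. u (F k) = 0" using spec[OF assms[unfolded lin_indep_family_def], of "\<lambda>k. u (F k)"] by simp
    then show False using u(1) by auto
  qed
qed

lemma lif_intro:
  assumes inj: "inj_on (F :: nat \<Rightarrow> (nat \<Rightarrow> nat) \<Rightarrow> 'a::field) {..<s}" and ind: "V.independent (F ` {..<s})"
  shows "lin_indep_family s F"
  unfolding lin_indep_family_def
proof (intro allI impI)
  fix c i assume c: "\<forall>a. (\<Sum>i<s. c i * F i a) = 0" and i: "i < s"
  define u where "u v = c (the_inv_into {..<s} F v)" for v
  have "(\<Sum>v\<in>F ` {..<s}. pscale (u v) v) = 0"
  proof
    fix a
    have "(\<Sum>v\<in>F ` {..<s}. pscale (u v) v) a = (\<Sum>k<s. u (F k) * F k a)" by (rule sum_img_apply[OF inj])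
    also have "\<dots> = (\<Sum>k<s. c k * F k a)" by (rule sum.cong) (auto simp: u_def the_inv_into_f_f[OF inj])
    finally show "(\<Sum>v\<in>F ` {..<s}. pscale (u v) v) a = 0 a" using c by simp
  qed
  then have "u (F i) = 0" using V.independentD[OF ind, of "F ` {..<s}" u "F i"] i by auto
  then show "c i = 0" using i by (simp add: u_def the_inv_into_f_f[OF inj])
qed

lemma finite_gens: "finite (ideal_gens TYPE('a::{finite,field}) d m)"
proof -
  define gen where "gen = (\<lambda>(b, i, j). (\<lambda>a. mon_vec (\<lambda>k. b k + (if k = i then CARD('a) else 0) + (if k = j then 1 else 0)) a
         - mon_vec (\<lambda>k. b k + (if k = i then 1 else 0) + (if k = j then CARD('a) else 0)) a :: 'a))"
  have "ideal_gens TYPE('a) d m \<subseteq> gen ` (Mon (d - (CARD('a) + 1)) m \<times> {..m} \<times> {..m})"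
  proof
    fix g assume "g \<in> ideal_gens TYPE('a) d m"
    then obtain b i j where "i < j" "j \<le> m" "b \<in> Mon (d - (CARD('a) + 1)) m"
      and g: "g = (\<lambda>a. mon_vec (\<lambda>k. b k + (if k = i then CARD('a) else 0) + (if k = j then 1 else 0)) a
         - mon_vec (\<lambda>k. b k + (if k = i then 1 else 0) + (if k = j then CARD('a) else 0)) a)"
      unfolding ideal_gens_def by blast
    then show "g \<in> gen ` (Mon (d - (CARD('a) + 1)) m \<times> {..m} \<times> {..m})"
      by (intro image_eqI[of _ _ "(b, i, j)"]) (auto simp: gen_def)
  qed
  moreover have "finite (gen ` (Mon (d - (CARD('a) + 1)) m \<times> {..m} \<times> {..m}))"
    using finite_Mon by auto
  ultimately show ?thesis by (rule finite_subset)
qed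

lemma I_basis:
  obtains B where "B \<subseteq> V.span (ideal_gens TYPE('a::{finite,field}) d m)" "V.independent B"
    "V.span (ideal_gens TYPE('a) d m) \<subseteq> V.span B" "card B = r_dim TYPE('a) d m" "finite B"
proof -
  obtain B where B: "B \<subseteq> V.span (ideal_gens TYPE('a) d m)" "V.independent B"
    "V.span (ideal_gens TYPE('a) d m) \<subseteq> V.span B" "card B = V.dim (V.span (ideal_gens TYPE('a) d m))"
    by (rule V.basis_exists)
  have "finite B" using V.independent_span_bound[OF finite_gens B(2) B(1)] by simp
  then show ?thesis using that B unfolding r_dim_def by blast
qed

lemma finite_proj_space: "finite (proj_space m :: (nat \<Rightarrow> 'a::{finite,field}) set set)"
proof -
  define X where "X = {x :: nat \<Rightarrow> 'a. \<forall>i>m. x i = 0}"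
  have "X \<subseteq> (\<lambda>g i. if i \<le> m then g i else 0) ` (PiE {..m} (\<lambda>_. UNIV))"
  proof
    fix x assume "x \<in> X"
    then show "x \<in> (\<lambda>g i. if i \<le> m then g i else 0) ` (PiE {..m} (\<lambda>_. UNIV))"
      by (intro image_eqI[of _ _ "restrict x {..m}"]) (auto simp: X_def fun_eq_iff)
  qed
  then have fX: "finite X" by (rule finite_subset) (intro finite_imageI finite_PiE; simp)
  have "proj_space m \<subseteq> Pow X"
    unfolding proj_space_def X_def by auto
  then show ?thesis using fX by (meson finite_Pow_iff finite_subset)
qed

lemma finite_zero_set: "finite (zero_set m s F :: (nat \<Rightarrow> 'a::{finite,field}) set set)"
  by (rule finite_subset[OF _ finite_proj_space]) (auto simp: zero_set_def)

lemma Max_eq_dom: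
  fixes A B :: "nat set"
  assumes "finite A" "finite B" "\<forall>a\<in>A. \<exists>b\<in>B. a \<le> b" "\<forall>b\<in>B. \<exists>a\<in>A. b \<le> a"
  shows "Max A = Max B"
proof (cases "A = {}")
  case True
  then have "B = {}" using assms(4) by auto
  then show ?thesis using True by simp
next
  case False
  then have B: "B \<noteq> {}" using assms(3) by auto
  have "Max A \<le> Max B"
    using assms(3) Max_in[OF assms(1) False] Max_ge[OF assms(2)] by (meson order_trans)
  moreover have "Max B \<le> Max A"
    using assms(4) Max_in[OF assms(2) B] Max_ge[OF assms(1)] by (meson order_trans)
  ultimately show ?thesis by simp
qed


lemma dir2:
  fixes G :: "nat \<Rightarrow> (nat \<Rightarrow> nat) \<Rightarrow> 'a::{finite,field}"
  assumes G: "\<forall>i<r. G i \<in> hom_polys d m \<and> G i \<in> proj_reduced_polys CARD('a)" and Gi: "lin_indep_family r G"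
  shows "\<exists>F :: nat \<Rightarrow> (nat \<Rightarrow> nat) \<Rightarrow> 'a. (\<forall>i<r + r_dim TYPE('a) d m. F i \<in> hom_polys d m)
           \<and> lin_indep_family (r + r_dim TYPE('a) d m) F \<and> card (zero_set m r G) \<le> card (zero_set m (r + r_dim TYPE('a) d m) F)"
proof -
  define I where "I = V.span (ideal_gens TYPE('a) d m)"
  define rd where "rd = r_dim TYPE('a) d m"
  obtain B where B: "B \<subseteq> I" "V.independent B" "card B = rd" "finite B"
    unfolding I_def rd_def by (rule I_basis) blast
  obtain h where h: "bij_betw h {..<rd} B"
    using ex_bij_betw_nat_finite[OF B(4)] B(3) by (auto simp: atLeast0LessThan)
  have hI: "h j \<in> I" if "j < rd" for j using h B(1) that by (auto simp: bij_betw_def)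
  have Iprops: "f \<in> hom_polys d m \<and> (\<forall>x. peval m f x = 0)" if "f \<in> I" for f
    using I_props that unfolding I_def by blast
  define F where "F k = (if k < r then G k else h (k - r))" for k
  have Fh: "\<forall>i<r + rd. F i \<in> hom_polys d m"
    using G hI Iprops by (auto simp: F_def)
  have hli: "lin_indep_family rd h"
    by (rule lif_intro) (use h B(2) in \<open>auto simp: bij_betw_def\<close>)
  have Fli: "lin_indep_family (r + rd) F"
    unfolding lin_indep_family_def
  proof (intro allI impI)
    fix c :: "nat \<Rightarrow> 'a" and i assume c: "\<forall>a. (\<Sum>i<r + rd. c i * F i a) = 0" and i: "i < r + rd"
    define P where "P = (\<Sum>k<r. pscale (c k) (G k))"
    define Q where "Q = (\<Sum>j<rd. pscale (c (r + j)) (h j))"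
    have PQ: "P + Q = 0"
    proof
      fix a
      have "(P + Q) a = (\<Sum>k<r. c k * G k a) + (\<Sum>j<rd. c (r + j) * h j a)"
        by (simp add: P_def Q_def sum_fun_apply pscale_def)
      also have "\<dots> = (\<Sum>i<r + rd. c i * F i a)" by (simp add: sum_split_add F_def)
      finally show "(P + Q) a = 0 a" using c by simp
    qed
    have QI: "Q \<in> I" unfolding Q_def I_def using hI unfolding I_def by (intro V.span_sum V.span_scale) auto
    have "P = - Q" using PQ by (simp add: eq_neg_iff_add_eq_0)
    then have PI: "P \<in> I" using QI V.span_neg[of Q] unfolding I_def by simp
    have Ph: "P \<in> hom_polys d m" unfolding P_def using G by (intro hom_sum hom_scale) auto
    have Pr: "P \<in> proj_reduced_polys CARD('a)" unfolding P_def using G by (intro red_sum red_scale) auto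
    have P0: "P = 0" by (rule proj_zero[OF Ph Pr]) (use Iprops[OF PI] in blast)
    have cG: "\<forall>k<r. c k = 0"
    proof -
      have "(\<Sum>k<r. c k * G k a) = 0" for a
        using fun_cong[OF P0, of a] by (simp add: P_def sum_fun_apply pscale_def)
      then show ?thesis using spec[OF Gi[unfolded lin_indep_family_def], of c] by simp
    qed
    have cH: "\<forall>j<rd. c (r + j) = 0"
    proof -
      have Q0: "Q = 0" using PQ P0 by simp
      have "(\<Sum>j<rd. c (r + j) * h j a) = 0" for a
        using fun_cong[OF Q0, of a] by (simp add: Q_def sum_fun_apply pscale_def)
      then show ?thesis using spec[OF hli[unfolded lin_indep_family_def], of "\<lambda>j. c (r + j)"] by simp
    qed
    show "c i = 0"
    proof (cases "i < r")
      case True then show ?thesis using cG by simp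
    next
      case False
      then have "i = r + (i - r)" "i - r < rd" using i by auto
      moreover have "c (r + (i - r)) = 0" using cH \<open>i - r < rd\<close> by blast
      ultimately show ?thesis by simp
    qed
  qed
  have "zero_set m r G \<subseteq> zero_set m (r + rd) F"
  proof
    fix P assume P: "P \<in> zero_set m r G"
    show "P \<in> zero_set m (r + rd) F"
      unfolding zero_set_def
    proof (intro CollectI conjI ballI allI impI)
      show "P \<in> proj_space m" using P by (simp add: zero_set_def)
      fix x i assume x: "x \<in> P" and i: "i < r + rd"
      show "peval m (F i) x = 0"
      proof (cases "i < r")
        case True then show ?thesis using P x by (simp add: zero_set_def F_def)
      next
        case False
        then have "F i \<in> I" using hI i by (simp add: F_def)
        then show ?thesis using Iprops by blast
      qed
    qed
  qed
  then have "card (zero_set m r G) \<le> card (zero_set m (r + rd) F)"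
    by (rule card_mono[OF finite_zero_set])
  then show ?thesis using Fh Fli unfolding rd_def by blast
qed


lemma dir1:
  fixes F :: "nat \<Rightarrow> (nat \<Rightarrow> nat) \<Rightarrow> 'a::{finite,field}"
  assumes Fh: "\<forall>i<r + r_dim TYPE('a) d m. F i \<in> hom_polys d m" and Fi: "lin_indep_family (r + r_dim TYPE('a) d m) F"
  shows "\<exists>G :: nat \<Rightarrow> (nat \<Rightarrow> nat) \<Rightarrow> 'a. (\<forall>i<r. G i \<in> hom_polys d m \<and> G i \<in> proj_reduced_polys CARD('a))
           \<and> lin_indep_family r G \<and> card (zero_set m (r + r_dim TYPE('a) d m) F) \<le> card (zero_set m r G)"
proof -
  define I where "I = V.span (ideal_gens TYPE('a) d m)"
  define rd where "rd = r_dim TYPE('a) d m"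
  define s where "s = r + rd"
  obtain B where B: "B \<subseteq> I" "V.independent B" "I \<subseteq> V.span B" "card B = rd" "finite B"
    unfolding I_def rd_def by (rule I_basis) blast
  have Iprops: "f \<in> hom_polys d m \<and> (\<forall>x. peval m f x = 0)" if "f \<in> I" for f
    using I_props that unfolding I_def by blast
  define Fs where "Fs = F ` {..<s}"
  have Finj: "inj_on F {..<s}" and Find: "V.independent Fs"
    using lif_imp[OF Fi] unfolding Fs_def s_def rd_def by auto
  have cFs: "card Fs = s" unfolding Fs_def using card_image[OF Finj] by simp
  obtain B' where B': "B \<subseteq> B'" "B' \<subseteq> B \<union> Fs" "V.independent B'" "B \<union> Fs \<subseteq> V.span B'"
    using V.maximal_independent_subset_extend[of B "B \<union> Fs"] B(2) by blast
  have finB': "finite B'" using B' B(5) unfolding Fs_def by (meson finite_Un finite_imageI finite_lessThan finite_subset)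
  have "card Fs \<le> card B'" using V.independent_span_bound[OF finB' Find] B'(4) by auto
  then have cB': "s \<le> card B'" using cFs by simp
  define C where "C = B' - B"
  have cC: "card C = card B' - rd" unfolding C_def using card_Diff_subset[OF B(5) B'(1)] B(4) by simp
  have CF: "C \<subseteq> Fs" using B' unfolding C_def by auto
  have rC: "r \<le> card C" using cC cB' unfolding s_def by simp
  obtain C' where C': "C' \<subseteq> C" "card C' = r" "finite C'" by (rule obtain_subset_with_card_n[OF rC])
  obtain e where e: "bij_betw e {..<r} C'"
    using ex_bij_betw_nat_finite[OF C'(3)] C'(2) by (auto simp: atLeast0LessThan)
  have eF: "e k \<in> Fs" if "k < r" for k using e C'(1) CF that by (auto simp: bij_betw_def)
  have eh: "e k \<in> hom_polys d m" if "k < r" for k using eF[OF that] Fh unfolding Fs_def s_def rd_def by auto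
  define G where "G k = (SOME g. g \<in> hom_polys d m \<and> g \<in> proj_reduced_polys CARD('a) \<and> e k - g \<in> I)" for k
  have Gp: "G k \<in> hom_polys d m \<and> G k \<in> proj_reduced_polys CARD('a) \<and> e k - G k \<in> I" if "k < r" for k
    unfolding G_def I_def by (rule someI_ex[OF reduce_hom[OF eh[OF that]]])
  have Gli: "lin_indep_family r G"
    unfolding lin_indep_family_def
  proof (intro allI impI)
    fix c :: "nat \<Rightarrow> 'a" and i assume c: "\<forall>a. (\<Sum>i<r. c i * G i a) = 0" and i: "i < r"
    define W where "W = (\<Sum>k<r. pscale (c k) (e k))"
    have G0: "(\<Sum>k<r. pscale (c k) (G k)) = 0"
    proof
      fix a show "(\<Sum>k<r. pscale (c k) (G k)) a = 0 a" using c by (simp add: sum_fun_apply pscale_def)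
    qed
    have "W = W - (\<Sum>k<r. pscale (c k) (G k))" using G0 by simp
    also have "\<dots> = (\<Sum>k<r. pscale (c k) (e k - G k))"
      by (simp add: W_def sum_subtractf V.scale_right_diff_distrib)
    finally have "W \<in> I" using Gp unfolding I_def by (metis (no_types, lifting) V.span_scale V.span_sum lessThan_iff)
    then have "W \<in> V.span B" using B(3) by blast
    then obtain t where t: "W = (\<Sum>v\<in>B. pscale (t v) v)" using V.span_finite[OF B(5)] by auto
    have disj: "C' \<inter> B = {}" using C'(1) unfolding C_def by auto
    have indCB: "V.independent (C' \<union> B)"
      by (rule V.independent_mono[OF B'(3)]) (use C'(1) B'(1) in \<open>auto simp: C_def\<close>)
    define u where "u v = (if v \<in> C' then c (the_inv_into {..<r} e v) else - t v)" for v
    have einj: "inj_on e {..<r}" and eim: "e ` {..<r} = C'" using e by (auto simp: bij_betw_def)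
    have "(\<Sum>v\<in>C' \<union> B. pscale (u v) v) = (\<Sum>v\<in>C'. pscale (u v) v) + (\<Sum>v\<in>B. pscale (u v) v)"
      by (rule sum.union_disjoint[OF C'(3) B(5) disj])
    also have "(\<Sum>v\<in>C'. pscale (u v) v) = W"
    proof -
      have "(\<Sum>v\<in>C'. pscale (u v) v) = (\<Sum>k<r. pscale (u (e k)) (e k))"
        unfolding eim[symmetric] by (rule sum.reindex[OF einj, unfolded comp_def])
      also have "\<dots> = W" unfolding W_def
        by (rule sum.cong) (auto simp: u_def the_inv_into_f_f[OF einj] eim[symmetric])
      finally show ?thesis .
    qed
    also have "(\<Sum>v\<in>B. pscale (u v) v) = (\<Sum>v\<in>B. pscale (- t v) v)"
      by (rule sum.cong) (use disj in \<open>auto simp: u_def\<close>)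
    also have "\<dots> = - W" unfolding t by (simp add: sum_negf pscale_def fun_eq_iff sum_fun_apply)
    finally have z: "(\<Sum>v\<in>C' \<union> B. pscale (u v) v) = 0" by (simp add: zero_fun_def)
    have "u (e i) = 0"
      by (rule V.independentD[OF indCB _ _ z]) (use C'(3) B(5) eim i in auto)
    moreover have "e i \<in> C'" using i eim by auto
    ultimately show "c i = 0" using i by (simp add: u_def the_inv_into_f_f[OF einj])
  qed
  have "zero_set m s F \<subseteq> zero_set m r G"
  proof
    fix P assume P: "P \<in> zero_set m s F"
    show "P \<in> zero_set m r G"
      unfolding zero_set_def
    proof (intro CollectI conjI ballI allI impI)
      show "P \<in> proj_space m" using P by (simp add: zero_set_def)
      fix x i assume x: "x \<in> P" and i: "i < r"
      obtain j where j: "j < s" "e i = F j" using eF[OF i] unfolding Fs_def by auto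
      have "peval m (G i) x = peval m (e i) x - peval m (e i - G i) x"
        using peval_diff[OF eh[OF i], of "G i"] Gp[OF i] by simp
      also have "peval m (e i - G i) x = 0" using Iprops Gp[OF i] by blast
      also have "peval m (e i) x = 0" using P x j unfolding zero_set_def by auto
      finally show "peval m (G i) x = 0" by simp
    qed
  qed
  then have "card (zero_set m s F) \<le> card (zero_set m r G)"
    by (rule card_mono[OF finite_zero_set])
  then show ?thesis using Gp Gli unfolding s_def rd_def by blast
qed


lemma finite_cards: "finite {card (zero_set m s F) | F :: nat \<Rightarrow> ((nat \<Rightarrow> nat) \<Rightarrow> 'a::{finite,field}). P F}"
proof (rule finite_subset)
  show "{card (zero_set m s F) | F :: nat \<Rightarrow> ((nat \<Rightarrow> nat) \<Rightarrow> 'a). P F} \<subseteq> card ` Pow (proj_space m :: (nat \<Rightarrow> 'a) set set)"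
    by (auto simp: zero_set_def)
  show "finite (card ` Pow (proj_space m :: (nat \<Rightarrow> 'a) set set))" by (rule finite_imageI) (simp add: finite_proj_space)
qed

lemma main_eq: "e_max TYPE('a::{finite,field}) (r + r_dim TYPE('a) d m) d m = e_bar TYPE('a) r d m"
  unfolding e_max_def e_bar_def
proof (rule Max_eq_dom[OF finite_cards finite_cards]; intro ballI)
  fix a assume "a \<in> {card (zero_set m (r + r_dim TYPE('a) d m) F) | F :: nat \<Rightarrow> ((nat \<Rightarrow> nat) \<Rightarrow> 'a).
       (\<forall>i<r + r_dim TYPE('a) d m. F i \<in> hom_polys d m) \<and> lin_indep_family (r + r_dim TYPE('a) d m) F}"
  then obtain F :: "nat \<Rightarrow> ((nat \<Rightarrow> nat) \<Rightarrow> 'a)" where a: "a = card (zero_set m (r + r_dim TYPE('a) d m) F)"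
    and F: "\<forall>i<r + r_dim TYPE('a) d m. F i \<in> hom_polys d m" "lin_indep_family (r + r_dim TYPE('a) d m) F" by blast
  obtain G :: "nat \<Rightarrow> ((nat \<Rightarrow> nat) \<Rightarrow> 'a)" where G: "\<forall>i<r. G i \<in> hom_polys d m \<and> G i \<in> proj_reduced_polys CARD('a)"
    "lin_indep_family r G" "card (zero_set m (r + r_dim TYPE('a) d m) F) \<le> card (zero_set m r G)"
    using dir1[OF F] by blast
  show "\<exists>b\<in>{card (zero_set m r F) | F :: nat \<Rightarrow> ((nat \<Rightarrow> nat) \<Rightarrow> 'a).
       (\<forall>i<r. F i \<in> hom_polys d m \<and> F i \<in> proj_reduced_polys (CARD('a))) \<and> lin_indep_family r F}. a \<le> b"
    using G a by blast
next
  fix b assume "b \<in> {card (zero_set m r F) | F :: nat \<Rightarrow> ((nat \<Rightarrow> nat) \<Rightarrow> 'a).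
       (\<forall>i<r. F i \<in> hom_polys d m \<and> F i \<in> proj_reduced_polys (CARD('a))) \<and> lin_indep_family r F}"
  then obtain G :: "nat \<Rightarrow> ((nat \<Rightarrow> nat) \<Rightarrow> 'a)" where b: "b = card (zero_set m r G)"
    and G: "\<forall>i<r. G i \<in> hom_polys d m \<and> G i \<in> proj_reduced_polys CARD('a)" "lin_indep_family r G" by blast
  obtain F :: "nat \<Rightarrow> ((nat \<Rightarrow> nat) \<Rightarrow> 'a)" where F: "\<forall>i<r + r_dim TYPE('a) d m. F i \<in> hom_polys d m"
    "lin_indep_family (r + r_dim TYPE('a) d m) F" "card (zero_set m r G) \<le> card (zero_set m (r + r_dim TYPE('a) d m) F)"
    using dir2[OF G] by blast
  show "\<exists>a\<in>{card (zero_set m (r + r_dim TYPE('a) d m) F) | F :: nat \<Rightarrow> ((nat \<Rightarrow> nat) \<Rightarrow> 'a).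
       (\<forall>i<r + r_dim TYPE('a) d m. F i \<in> hom_polys d m) \<and> lin_indep_family (r + r_dim TYPE('a) d m) F}. b \<le> a"
    using F b by blast
qed

lemma rdim_zero: "d \<le> CARD('a::{finite,field}) \<Longrightarrow> r_dim TYPE('a) d m = 0"
proof -
  assume "d \<le> CARD('a)"
  then have "ideal_gens TYPE('a) d m = {}" unfolding ideal_gens_def by auto
  moreover have "V.dim (V.span ({} :: ((nat \<Rightarrow> nat) \<Rightarrow> 'a) set)) = V.dim ({} :: ((nat \<Rightarrow> nat) \<Rightarrow> 'a) set)"
    by (rule V.dim_span)
  moreover have "V.dim ({} :: ((nat \<Rightarrow> nat) \<Rightarrow> 'a) set) = 0"
    using V.dim_eq_card_independent[OF V.independent_empty] by simp
  ultimately show ?thesis unfolding r_dim_def by (simp only:)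
qed

theorem theorem5p2:
  fixes d r m :: nat
  assumes "1 \<le> m"
    and "r \<le> ((m + d) choose d) - r_dim TYPE('a::{finite,field}) d m"
  shows "e_max TYPE('a) (r + r_dim TYPE('a) d m) d m = e_bar TYPE('a) r d m
         \<and> (d \<le> CARD('a) \<longrightarrow> e_max TYPE('a) r d m = e_bar TYPE('a) r d m)"
  using main_eq[where 'a='a and r=r and d=d and m=m] rdim_zero[where 'a='a and d=d and m=m] by auto

end
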